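(* Let $M$ be a graded generalized Eulerian $A_1(K)$-module. Then $H_0(X_1;M)=M/X_1M$ and $H_1(X_1;M)=\ker(X_1\colon M(-1)\to M)$ are graded $K$-vector spaces concentrated in degree $0$.
   Context: $K$ is a field of characteristic zero; $A_1(K)=K\langle X_1,\partial_1\rangle$ with $\partial_1X_1-X_1\partial_1=1$, graded by $\deg X_1=1$, $\deg\partial_1=-1$. A graded $A_1(K)$-module $M$ is generalized Eulerian if for every homogeneous $z\in M$ of degree $|z|$ there is $a\ge1$ with $(X_1\partial_1-|z|)^az=0$. $M(l)_j=M_{j+l}$. *)

theory Defs
  imports Complex_Main
begin

text \<open>A graded module over the first Weyl algebra A_1(K) = K<X_1, d_1>, d_1 X_1 - X_1 d_1 = 1,
  with deg X_1 = 1, deg d_1 = -1.  The module is the type 'm, a K-vector space via smul;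
  X and D are the actions of X_1 and d_1; Mg j is the degree-j component.\<close>

definition graded_A1_module ::
  "('k::field \<Rightarrow> 'm::ab_group_add \<Rightarrow> 'm) \<Rightarrow> ('m \<Rightarrow> 'm) \<Rightarrow> ('m \<Rightarrow> 'm) \<Rightarrow> (int \<Rightarrow> 'm set) \<Rightarrow> bool"
where
  "graded_A1_module smul X D Mg \<longleftrightarrow>
     vector_space smul \<and>
     Vector_Spaces.linear smul smul X \<and> Vector_Spaces.linear smul smul D \<and>
     (\<forall>m. D (X m) - X (D m) = m) \<and>
     (\<forall>j. module.subspace smul (Mg j)) \<and>
     (\<forall>j. X ` Mg j \<subseteq> Mg (j + 1)) \<and>
     (\<forall>j. D ` Mg j \<subseteq> Mg (j - 1)) \<and>
     (\<forall>m. \<exists>S f. finite S \<and> (\<forall>j\<in>S. f j \<in> Mg j) \<and> m = sum f S) \<and>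
     (\<forall>S f. finite S \<and> (\<forall>j\<in>S. f j \<in> Mg j) \<and> sum f S = 0 \<longrightarrow> (\<forall>j\<in>S. f j = 0))"

definition gen_eulerian ::
  "('k::field \<Rightarrow> 'm::ab_group_add \<Rightarrow> 'm) \<Rightarrow> ('m \<Rightarrow> 'm) \<Rightarrow> ('m \<Rightarrow> 'm) \<Rightarrow> (int \<Rightarrow> 'm set) \<Rightarrow> bool"
where
  "gen_eulerian smul X D Mg \<longleftrightarrow>
     (\<forall>j. \<forall>z\<in>Mg j. \<exists>a::nat. a \<ge> 1 \<and> ((\<lambda>m. X (D m) - smul (of_int j) m) ^^ a) z = 0)"

definition shift :: "(int \<Rightarrow> 'm set) \<Rightarrow> int \<Rightarrow> int \<Rightarrow> 'm set" where
  "shift Mg l j = Mg (j + l)"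

text \<open>Degree-j component of H_0(X_1;M) = M/X_1 M vanishes: M_j \<subseteq> (X_1 M)_j = X_1 M_{j-1}.\<close>
definition H0_vanishes_in_degree ::
  "('m::ab_group_add \<Rightarrow> 'm) \<Rightarrow> (int \<Rightarrow> 'm set) \<Rightarrow> int \<Rightarrow> bool" where
  "H0_vanishes_in_degree X Mg j \<longleftrightarrow> Mg j \<subseteq> X ` (Mg (j - 1))"

definition H1_component :: "('m::ab_group_add \<Rightarrow> 'm) \<Rightarrow> (int \<Rightarrow> 'm set) \<Rightarrow> int \<Rightarrow> 'm set" where
  "H1_component X Mg j = {z \<in> shift Mg (-1) j. X z = 0}"

end

theory Submission
  imports Defs
begin

theorem mainTheorem10:
  fixes smul :: "'k::field_char_0 \<Rightarrow> 'm::ab_group_add \<Rightarrow> 'm"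
    and X D :: "'m \<Rightarrow> 'm"
    and Mg :: "int \<Rightarrow> 'm set"
  assumes "graded_A1_module smul X D Mg"
    and "gen_eulerian smul X D Mg"
  shows "\<forall>j::int. j \<noteq> 0 \<longrightarrow> H0_vanishes_in_degree X Mg j \<and> H1_component X Mg j = {0}"
proof (intro allI impI conjI)
  fix j :: int assume j0: "j \<noteq> 0"
  have vs: "vector_space smul" and lX: "Vector_Spaces.linear smul smul X"
    and lD: "Vector_Spaces.linear smul smul D"
    and comm: "\<And>m. D (X m) - X (D m) = m"
    and sub: "\<And>j. module.subspace smul (Mg j)"
    and Xg: "\<And>j. X ` Mg j \<subseteq> Mg (j + 1)"
    and Dg: "\<And>j. D ` Mg j \<subseteq> Mg (j - 1)"
    using assms(1) unfolding graded_A1_module_def by auto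
  interpret vector_space smul by (rule vs)
  have md: "module smul" using vs module_iff_vector_space by blast
  have hX: "module_hom smul smul X" using lX linear_iff_module_hom by blast
  have hD: "module_hom smul smul D" using lD linear_iff_module_hom by blast
  interpret X: module_hom smul smul X by (rule hX)
  interpret D: module_hom smul smul D by (rule hD)
  have jk: "(of_int j :: 'k) \<noteq> 0" using j0 by simp
  have ge: "\<And>z. z \<in> Mg j \<Longrightarrow> \<exists>a::nat. a \<ge> 1 \<and> ((\<lambda>m. X (D m) - smul (of_int j) m) ^^ a) z = 0"
    using assms(2) unfolding gen_eulerian_def by blast
  define f where "f = (\<lambda>m. X (D m) - smul (of_int j) m)"
  define I where "I = X ` Mg (j - 1)"
  have I0: "0 \<in> I" unfolding I_def
    using subspace_0[OF sub] X.zero by (metis image_eqI)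
  have Idiff: "a \<in> I \<Longrightarrow> b \<in> I \<Longrightarrow> a - b \<in> I" for a b
  proof -
    assume "a \<in> I" "b \<in> I"
    then obtain u v where "u \<in> Mg (j-1)" "v \<in> Mg (j-1)" "a = X u" "b = X v"
      unfolding I_def by blast
    then show ?thesis unfolding I_def using subspace_diff[OF sub] X.diff
      by (metis image_eqI)
  qed
  have Iscale: "a \<in> I \<Longrightarrow> smul c a \<in> I" for a c
  proof -
    assume "a \<in> I"
    then obtain u where "u \<in> Mg (j-1)" "a = X u"
      unfolding I_def by blast
    then show ?thesis unfolding I_def using subspace_scale[OF sub] X.scale
      by (metis image_eqI)
  qed
  have XDI: "z \<in> Mg j \<Longrightarrow> X (D z) \<in> I" for z
    unfolding I_def using Dg by blast
  have XDM: "z \<in> Mg j \<Longrightarrow> X (D z) \<in> Mg j" for z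
    using Dg Xg[of "j-1"] by fastforce
  have fM: "z \<in> Mg j \<Longrightarrow> f z \<in> Mg j" for z
    unfolding f_def using XDM subspace_diff[OF sub] subspace_scale[OF sub] by blast
  have key: "\<And>z. z \<in> Mg j \<Longrightarrow> (f ^^ a) z = 0 \<Longrightarrow> z \<in> I" for a
  proof (induction a)
    case 0 then show ?case using I0 by simp
  next
    case (Suc a)
    have "(f ^^ a) (f z) = 0" using Suc.prems(2) by (simp add: funpow_Suc_right del: funpow.simps)
    then have fz: "f z \<in> I" using Suc.IH[of "f z"] Suc.prems fM by blast
    have "smul (of_int j) z = X (D z) - f z" unfolding f_def by simp
    then have "smul (of_int j) z \<in> I" using Idiff XDI Suc.prems fz by metis
    then have "smul (inverse (of_int j)) (smul (of_int j) z) \<in> I" by (rule Iscale)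
    then show ?case using jk by simp
  qed
  show "H0_vanishes_in_degree X Mg j"
    unfolding H0_vanishes_in_degree_def
  proof
    fix z assume z: "z \<in> Mg j"
    then obtain a where "((\<lambda>m. X (D m) - smul (of_int j) m) ^^ a) z = 0" using ge by blast
    then show "z \<in> X ` Mg (j - 1)" using key[OF z] unfolding f_def I_def by blast
  qed
  show "H1_component X Mg j = {0}"
  proof
    show "{0} \<subseteq> H1_component X Mg j"
      unfolding H1_component_def shift_def
      using subspace_0[OF sub] X.zero by auto
    show "H1_component X Mg j \<subseteq> {0}"
    proof
      fix z assume "z \<in> H1_component X Mg j"
      then have z: "z \<in> Mg (j - 1)" and Xz: "X z = 0"
        unfolding H1_component_def shift_def by auto
      have "- X (D z) = z" using comm[of z] Xz D.zero by simp
      then have tz: "X (D z) = - z" by (simp add: minus_equation_iff)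
      define g where "g = (\<lambda>m. X (D m) - smul (of_int (j-1)) m)"
      have gz: "g (smul c z) = smul (c * (- of_int j)) z" for c
      proof -
        have "g (smul c z) = smul c (X (D z)) - smul (c * of_int (j-1)) z"
          unfolding g_def by (simp add: X.scale D.scale)
        also have "\<dots> = smul (c * (- of_int j)) z"
          unfolding tz by (simp add: algebra_simps)
        finally show ?thesis .
      qed
      have gn: "(g ^^ n) z = smul ((- of_int j) ^ n) z" for n
      proof (induction n)
        case 0 then show ?case by simp
      next
        case (Suc n) then show ?case using gz by (simp add: mult.commute)
      qed
      obtain a where "(g ^^ a) z = 0"
        using assms(2) z unfolding gen_eulerian_def g_def by blast
      then have "smul ((- of_int j) ^ a) z = 0" using gn by simp
      then show "z \<in> {0}" using jk by simp
    qed
  qed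
qed

end
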